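(* Let $p$ be a well-formed cons-free program, and suppose $[\![p]\!](d_1,\dots,d_M)\mapsto b$ is obtained by a derivation tree $T$. Then for every judgement in $T$ of one of the forms $p,\gamma\vdash s\to w$, $p,\gamma\vdash^{\mathrm{if}} b',s_1,s_2\to w$, or $p\vdash^{\mathrm{call}} f\,v_1\cdots v_n\to w$, and for every expression $t$ such that (a) $w\unrhd t$, (b) $b'\unrhd t$, (c) $\gamma(x)\unrhd t$ for some variable $x$, or (d) $v_i\unrhd t$ for some $i$: if $t$ has the form $c\,b_1\cdots b_m$ with $c\in\mathcal{C}$, then $t\in\mathcal{B}^p_{d_1,\dots,d_M}$.
   Context: Types are built from a finite set $\mathcal{S}$ of sorts (containing $\mathsf{bool}$) by $\sigma ::= \iota \mid \sigma \times \tau \mid \sigma \Rightarrow \tau$, with $\Rightarrow$ right-associative. Type order: $\mathrm{ord}(\iota)=0$ for sorts, $\mathrm{ord}(\sigma\times\tau)=\max(\mathrm{ord}(\sigma),\mathrm{ord}(\tau))$, $\mathrm{ord}(\sigma\Rightarrow\tau)=\max(\mathrm{ord}(\sigma)+1,\mathrm{ord}(\tau))$. Write $\kappa$ for a type that is a sort or a product; every type is uniquely $\sigma_1\Rightarrow\cdots\Rightarrow\sigma_m\Rightarrow\kappa$. Syntax. Fix pairwise disjoint sets of variables, data constructors $\mathcal{C}$ (containing $\mathsf{true},\mathsf{false}$) and defined symbols $\mathcal{D}$. Patterns: $\ell ::= x \mid c\,\ell_1\cdots\ell_m$ ($c\in\mathcal{C}$). Expressions: $s ::= x \mid c \mid f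 \mid \mathsf{if}\ s_1\ \mathsf{then}\ s_2\ \mathsf{else}\ s_3 \mid \mathsf{choose}\ s_1\cdots s_n \mid (s,t) \mid s\,t$ (application left-associative). A program is a finite list of clauses $f\,\ell_1\cdots\ell_k = s$ with $f \in \mathcal{D}$; its main function $f_1$ is the defined symbol of the first clause. Sub-expressions: $s \unrhd t$ iff $s = t$ or $s \rhd t$, where $(s_1,s_2)\rhd t$, $\mathsf{if}\ s_1\ \mathsf{then}\ s_2\ \mathsf{else}\ s_3 \rhd t$ and $\mathsf{choose}\ s_1\cdots s_n\rhd t$ hold if $s_i \unrhd t$ for some $i$, and $s_1\,s_2 \rhd t$ holds if $s_1 \rhd t$ or $s_2 \unrhd t$. Typing. A program is well-typed if there is an assignment $\mathcal{F}$ of simple types to $\mathcal{C}\cup\mathcal{D}$ such that: $f_1 : \kappa_1\Rightarrow\cdots\Rightarrow\kappa_M\Rightarrow\kappa$ with all $\kappa_i,\kappa$ of order $0$; each $c\in\mathcal{C}$ has type $\kappa_1\Rightarrow\cdots\Rightarrow\kappa_m\Rightarrow\iota$ with $\iota$ a sort and all $\kappa_i$ of order $0$; and for every clause $f\,\ell_1\cdots\ell_k=s$, all variables of $s$ occur in the left-hand side, each variable occurs at most once in the left-hand side, and there is a type environment $\Gamma$ for the left-hand side variables under which both sides have the same type (standard simple typing). It is well-formed if moreover constructors always occur fully applied and all clauses with the same root $f$ have the same number $\mathrm{arity}(f)$ of arguments. Semantics. Data expressions $d ::= c\,d_1\cdots d_m \mid (d,d')$; values $v ::= d \mid (v,w)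 \mid f\,v_1\cdots v_n$ with $n<\mathrm{arity}(f)$; environments $\gamma$ map variables to values and $\ell\gamma$ is instantiation. Judgements $p,\gamma\vdash s\to w$, $p,\gamma\vdash^{\mathrm{if}} d,s_2,s_3\to w$ and $p\vdash^{\mathrm{call}} f\,v_1\cdots v_n\to w$ are derived by: $p,\gamma\vdash x\to\gamma(x)$; $p,\gamma\vdash f\to w$ if $p\vdash^{\mathrm{call}} f\to w$; $p,\gamma\vdash c\,s_1\cdots s_m\to c\,b_1\cdots b_m$ if $p,\gamma\vdash s_i\to b_i$ for all $i$; $p,\gamma\vdash(s,t)\to(v,w)$ if $p,\gamma\vdash s\to v$ and $p,\gamma\vdash t\to w$; $p,\gamma\vdash \mathsf{choose}\ s_1\cdots s_n\to w$ if $p,\gamma\vdash s_i\to w$ for some $i$; $p,\gamma\vdash\mathsf{if}\ s_1\ \mathsf{then}\ s_2\ \mathsf{else}\ s_3\to w$ if $p,\gamma\vdash s_1\to d$ and $p,\gamma\vdash^{\mathrm{if}} d,s_2,s_3\to w$, where $p,\gamma\vdash^{\mathrm{if}}\mathsf{true},s_2,s_3\to w$ if $p,\gamma\vdash s_2\to w$ and $p,\gamma\vdash^{\mathrm{if}}\mathsf{false},s_2,s_3\to w$ if $p,\gamma\vdash s_3\to w$; $p,\gamma\vdash s\,t\to w$ if $p,\gamma\vdash s\to f\,v_1\cdots v_n$, $p,\gamma\vdash t\to v_{n+1}$ and $p\vdash^{\mathrm{call}} f\,v_1\cdots v_{n+1}\to w$; $p\vdash^{\mathrm{call}} f\,v_1\cdots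 v_n\to f\,v_1\cdots v_n$ if $n<\mathrm{arity}(f)$; $p\vdash^{\mathrm{call}} f\,v_1\cdots v_k\to w$ if $p,\gamma\vdash s\to w$ where $f\,\ell_1\cdots\ell_k=s$ is the first clause of $p$ for which there is $\gamma$ with domain the left-hand side variables and $v_i=\ell_i\gamma$ for all $i$. Finally $[\![p]\!](d_1,\dots,d_M)\mapsto b$ holds iff there is a derivation tree (built with these rules) for $p,[x_1:=d_1,\dots,x_M:=d_M]\vdash f_1\,x_1\cdots x_M\to b$. Cons-freeness. A clause $f\,\ell_1\cdots\ell_k=s$ is cons-free if every $t$ with $s\unrhd t$ of the form $c\,s_1\cdots s_m$ with $c\in\mathcal{C}$ is a data expression or satisfies $\ell_i\unrhd t$ for some $i$; a program is cons-free if all its clauses are. $\mathcal{B}^p_{d_1,\dots,d_M}$ denotes the set of data expressions $d$ such that $d_i\unrhd d$ for some $i$, or $s\unrhd d$ for the right-hand side $s$ of some clause of $p$. *)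

theory Defs
  imports Main
begin

datatype 's ty = TBool | TSort 's | TProd "'s ty" "'s ty" | TArr "'s ty" "'s ty"

fun ty_over :: "'s set \<Rightarrow> 's ty \<Rightarrow> bool" where
  "ty_over S TBool = True"
| "ty_over S (TSort s) = (s \<in> S)"
| "ty_over S (TProd a b) = (ty_over S a \<and> ty_over S b)"
| "ty_over S (TArr a b) = (ty_over S a \<and> ty_over S b)"

fun ord :: "'s ty \<Rightarrow> nat" where
  "ord TBool = 0"
| "ord (TSort s) = 0"
| "ord (TProd a b) = max (ord a) (ord b)"
| "ord (TArr a b) = max (ord a + 1) (ord b)"

fun strip_arr :: "'s ty \<Rightarrow> 's ty list \<times> 's ty" where
  "strip_arr (TArr a b) = (let (as, r) = strip_arr b in (a # as, r))"
| "strip_arr t = ([], t)"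

fun is_sort :: "'s ty \<Rightarrow> bool" where
  "is_sort TBool = True"
| "is_sort (TSort s) = True"
| "is_sort _ = False"

datatype 'c cname = CTrue | CFalse | CName 'c

datatype ('v, 'c, 'f) expr =
    EVar 'v
  | ECon "'c cname"
  | EFun 'f
  | EIf "('v, 'c, 'f) expr" "('v, 'c, 'f) expr" "('v, 'c, 'f) expr"
  | EChoose "('v, 'c, 'f) expr list"
  | EPair "('v, 'c, 'f) expr" "('v, 'c, 'f) expr"
  | EApp "('v, 'c, 'f) expr" "('v, 'c, 'f) expr"

definition apps :: "('v, 'c, 'f) expr \<Rightarrow> ('v, 'c, 'f) expr list \<Rightarrow> ('v, 'c, 'f) expr" where
  "apps h xs = foldl EApp h xs"

text \<open>Proper sub-expression relation (s \<rhd> t) as in the paper; note that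
  for applications only the argument and the proper sub-expressions of the
  head count.\<close>
fun psub :: "('v, 'c, 'f) expr \<Rightarrow> ('v, 'c, 'f) expr \<Rightarrow> bool" where
  "psub (EPair a b) t = (a = t \<or> psub a t \<or> b = t \<or> psub b t)"
| "psub (EIf a b c) t = (a = t \<or> psub a t \<or> b = t \<or> psub b t \<or> c = t \<or> psub c t)"
| "psub (EChoose ss) t = (\<exists>s\<in>set ss. s = t \<or> psub s t)"
| "psub (EApp a b) t = (psub a t \<or> b = t \<or> psub b t)"
| "psub (EVar x) t = False"
| "psub (ECon c) t = False"
| "psub (EFun f) t = False"

definition sube :: "('v, 'c, 'f) expr \<Rightarrow> ('v, 'c, 'f) expr \<Rightarrow> bool" where
  "sube s t = (s = t \<or> psub s t)"

inductive is_data :: "('v, 'c, 'f) expr \<Rightarrow> bool" where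
  data_con: "\<forall>d\<in>set ds. is_data d \<Longrightarrow> is_data (apps (ECon c) ds)"
| data_pair: "is_data a \<Longrightarrow> is_data b \<Longrightarrow> is_data (EPair a b)"

inductive is_pattern :: "('v, 'c, 'f) expr \<Rightarrow> bool" where
  pat_var: "is_pattern (EVar x)"
| pat_con: "\<forall>l\<in>set ls. is_pattern l \<Longrightarrow> is_pattern (apps (ECon c) ls)"

fun varlist :: "('v, 'c, 'f) expr \<Rightarrow> 'v list" where
  "varlist (EVar x) = [x]"
| "varlist (ECon c) = []"
| "varlist (EFun f) = []"
| "varlist (EIf a b c) = varlist a @ varlist b @ varlist c"
| "varlist (EChoose ss) = concat (map varlist ss)"
| "varlist (EPair a b) = varlist a @ varlist b"
| "varlist (EApp a b) = varlist a @ varlist b"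

type_synonym ('v, 'c, 'f) env = "'v \<Rightarrow> ('v, 'c, 'f) expr option"

fun inst :: "('v, 'c, 'f) env \<Rightarrow> ('v, 'c, 'f) expr \<Rightarrow> ('v, 'c, 'f) expr" where
  "inst \<gamma> (EVar x) = (case \<gamma> x of Some v \<Rightarrow> v | None \<Rightarrow> EVar x)"
| "inst \<gamma> (ECon c) = ECon c"
| "inst \<gamma> (EFun f) = EFun f"
| "inst \<gamma> (EIf a b c) = EIf (inst \<gamma> a) (inst \<gamma> b) (inst \<gamma> c)"
| "inst \<gamma> (EChoose ss) = EChoose (map (inst \<gamma>) ss)"
| "inst \<gamma> (EPair a b) = EPair (inst \<gamma> a) (inst \<gamma> b)"
| "inst \<gamma> (EApp a b) = EApp (inst \<gamma> a) (inst \<gamma> b)"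

datatype ('v, 'c, 'f) clause =
  Clause (chead: 'f) (cargs: "('v, 'c, 'f) expr list") (crhs: "('v, 'c, 'f) expr")

type_synonym ('v, 'c, 'f) prog = "('v, 'c, 'f) clause list"

definition lhs_vars :: "('v, 'c, 'f) clause \<Rightarrow> 'v set" where
  "lhs_vars cl = set (concat (map varlist (cargs cl)))"

definition main_fun :: "('v, 'c, 'f) prog \<Rightarrow> 'f" where
  "main_fun p = chead (hd p)"

definition arity :: "('v, 'c, 'f) prog \<Rightarrow> 'f \<Rightarrow> nat" where
  "arity p f = (case find (\<lambda>cl. chead cl = f) p of Some cl \<Rightarrow> length (cargs cl) | None \<Rightarrow> 0)"

inductive typed :: "('c cname \<Rightarrow> 's ty) \<Rightarrow> ('f \<Rightarrow> 's ty) \<Rightarrow> ('v \<Rightarrow> 's ty option)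
    \<Rightarrow> ('v, 'c, 'f) expr \<Rightarrow> 's ty \<Rightarrow> bool"
  for Fc Ff where
  t_var: "\<Gamma> x = Some \<sigma> \<Longrightarrow> typed Fc Ff \<Gamma> (EVar x) \<sigma>"
| t_con: "typed Fc Ff \<Gamma> (ECon c) (Fc c)"
| t_fun: "typed Fc Ff \<Gamma> (EFun f) (Ff f)"
| t_if: "typed Fc Ff \<Gamma> a TBool \<Longrightarrow> typed Fc Ff \<Gamma> b \<sigma> \<Longrightarrow> typed Fc Ff \<Gamma> c \<sigma>
          \<Longrightarrow> typed Fc Ff \<Gamma> (EIf a b c) \<sigma>"
| t_choose: "\<forall>s\<in>set ss. typed Fc Ff \<Gamma> s \<sigma> \<Longrightarrow> typed Fc Ff \<Gamma> (EChoose ss) \<sigma>"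
| t_pair: "typed Fc Ff \<Gamma> a \<sigma> \<Longrightarrow> typed Fc Ff \<Gamma> b \<tau> \<Longrightarrow> typed Fc Ff \<Gamma> (EPair a b) (TProd \<sigma> \<tau>)"
| t_app: "typed Fc Ff \<Gamma> a (TArr \<sigma> \<tau>) \<Longrightarrow> typed Fc Ff \<Gamma> b \<sigma> \<Longrightarrow> typed Fc Ff \<Gamma> (EApp a b) \<tau>"

definition well_typed_with :: "'s set \<Rightarrow> ('c cname \<Rightarrow> 's ty) \<Rightarrow> ('f \<Rightarrow> 's ty)
    \<Rightarrow> ('v, 'c, 'f) prog \<Rightarrow> bool" where
  "well_typed_with S Fc Ff p =
    (p \<noteq> [] \<and>
     (\<forall>c. ty_over S (Fc c)) \<and> (\<forall>f. ty_over S (Ff f)) \<and>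
     (\<forall>k\<in>set (fst (strip_arr (Ff (main_fun p)))). ord k = 0) \<and>
     ord (snd (strip_arr (Ff (main_fun p)))) = 0 \<and>
     (\<forall>c. (\<forall>k\<in>set (fst (strip_arr (Fc c))). ord k = 0) \<and> is_sort (snd (strip_arr (Fc c)))) \<and>
     Fc CTrue = TBool \<and> Fc CFalse = TBool \<and>
     (\<forall>cl\<in>set p.
        (\<forall>l\<in>set (cargs cl). is_pattern l) \<and>
        set (varlist (crhs cl)) \<subseteq> lhs_vars cl \<and>
        distinct (concat (map varlist (cargs cl))) \<and>
        (\<exists>\<Gamma> \<sigma>. dom \<Gamma> = lhs_vars cl \<and> (\<forall>x \<tau>. \<Gamma> x = Some \<tau> \<longrightarrow> ty_over S \<tau>) \<and>
               typed Fc Ff \<Gamma> (apps (EFun (chead cl)) (cargs cl)) \<sigma> \<and>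
               typed Fc Ff \<Gamma> (crhs cl) \<sigma>)))"

text \<open>fully_applied ar e k: every constructor occurrence in e is applied to
  exactly its number of arguments, where e itself is applied to k arguments.\<close>
fun fully_applied :: "('c cname \<Rightarrow> nat) \<Rightarrow> ('v, 'c, 'f) expr \<Rightarrow> nat \<Rightarrow> bool" where
  "fully_applied ar (ECon c) k = (k = ar c)"
| "fully_applied ar (EVar x) k = True"
| "fully_applied ar (EFun f) k = True"
| "fully_applied ar (EApp a b) k = (fully_applied ar a (Suc k) \<and> fully_applied ar b 0)"
| "fully_applied ar (EIf a b c) k =
     (fully_applied ar a 0 \<and> fully_applied ar b 0 \<and> fully_applied ar c 0)"
| "fully_applied ar (EChoose ss) k = (\<forall>s\<in>set ss. fully_applied ar s 0)"
| "fully_applied ar (EPair a b) k = (fully_applied ar a 0 \<and> fully_applied ar b 0)"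

definition well_formed :: "'s set \<Rightarrow> ('v, 'c, 'f) prog \<Rightarrow> bool" where
  "well_formed S p =
    (\<exists>Fc Ff. well_typed_with S Fc Ff p \<and>
       (\<forall>cl\<in>set p.
          (\<forall>l\<in>set (cargs cl). fully_applied (\<lambda>c. length (fst (strip_arr (Fc c)))) l 0) \<and>
          fully_applied (\<lambda>c. length (fst (strip_arr (Fc c)))) (crhs cl) 0) \<and>
       (\<forall>cl1\<in>set p. \<forall>cl2\<in>set p. chead cl1 = chead cl2 \<longrightarrow>
          length (cargs cl1) = length (cargs cl2)))"

definition cons_free_clause :: "('v, 'c, 'f) clause \<Rightarrow> bool" where
  "cons_free_clause cl =
    (\<forall>t. sube (crhs cl) t \<longrightarrow> (\<exists>c ss. t = apps (ECon c) ss) \<longrightarrow>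
         is_data t \<or> (\<exists>l\<in>set (cargs cl). sube l t))"

definition cons_free :: "('v, 'c, 'f) prog \<Rightarrow> bool" where
  "cons_free p = (\<forall>cl\<in>set p. cons_free_clause cl)"

datatype ('v, 'c, 'f) judg =
    JEval "('v, 'c, 'f) env" "('v, 'c, 'f) expr" "('v, 'c, 'f) expr"
  | JIf "('v, 'c, 'f) env" "('v, 'c, 'f) expr" "('v, 'c, 'f) expr" "('v, 'c, 'f) expr" "('v, 'c, 'f) expr"
  | JCall 'f "('v, 'c, 'f) expr list" "('v, 'c, 'f) expr"

definition matches :: "('v, 'c, 'f) clause \<Rightarrow> 'f \<Rightarrow> ('v, 'c, 'f) expr list \<Rightarrow> bool" where
  "matches cl f vs = (chead cl = f \<and>
     (\<exists>\<gamma>. dom \<gamma> = lhs_vars cl \<and> vs = map (inst \<gamma>) (cargs cl)))"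

definition first_match :: "('v, 'c, 'f) prog \<Rightarrow> 'f \<Rightarrow> ('v, 'c, 'f) expr list \<Rightarrow> nat \<Rightarrow> bool" where
  "first_match p f vs i = (i < length p \<and> matches (p ! i) f vs \<and> (\<forall>j<i. \<not> matches (p ! j) f vs))"

inductive rule_inst :: "('v, 'c, 'f) prog \<Rightarrow> ('v, 'c, 'f) judg \<Rightarrow> ('v, 'c, 'f) judg list \<Rightarrow> bool"
  for p where
  r_var: "\<gamma> x = Some w \<Longrightarrow> rule_inst p (JEval \<gamma> (EVar x) w) []"
| r_fun: "rule_inst p (JEval \<gamma> (EFun f) w) [JCall f [] w]"
| r_con: "length ss = length bs \<Longrightarrow>
    rule_inst p (JEval \<gamma> (apps (ECon c) ss) (apps (ECon c) bs)) (map2 (JEval \<gamma>) ss bs)"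
| r_pair: "rule_inst p (JEval \<gamma> (EPair s t) (EPair v w)) [JEval \<gamma> s v, JEval \<gamma> t w]"
| r_choose: "i < length ss \<Longrightarrow> rule_inst p (JEval \<gamma> (EChoose ss) w) [JEval \<gamma> (ss ! i) w]"
| r_if: "rule_inst p (JEval \<gamma> (EIf s1 s2 s3) w) [JEval \<gamma> s1 d, JIf \<gamma> d s2 s3 w]"
| r_if_true: "rule_inst p (JIf \<gamma> (ECon CTrue) s2 s3 w) [JEval \<gamma> s2 w]"
| r_if_false: "rule_inst p (JIf \<gamma> (ECon CFalse) s2 s3 w) [JEval \<gamma> s3 w]"
| r_app: "rule_inst p (JEval \<gamma> (EApp s t) w)
    [JEval \<gamma> s (apps (EFun f) vs), JEval \<gamma> t v, JCall f (vs @ [v]) w]"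
| r_partial: "length vs < arity p f \<Longrightarrow> rule_inst p (JCall f vs (apps (EFun f) vs)) []"
| r_clause: "first_match p f vs i \<Longrightarrow> dom \<gamma> = lhs_vars (p ! i) \<Longrightarrow>
    vs = map (inst \<gamma>) (cargs (p ! i)) \<Longrightarrow>
    rule_inst p (JCall f vs w) [JEval \<gamma> (crhs (p ! i)) w]"

datatype ('v, 'c, 'f) dtree = DNode "('v, 'c, 'f) judg" "('v, 'c, 'f) dtree list"

fun droot :: "('v, 'c, 'f) dtree \<Rightarrow> ('v, 'c, 'f) judg" where
  "droot (DNode J ts) = J"

fun valid_tree :: "('v, 'c, 'f) prog \<Rightarrow> ('v, 'c, 'f) dtree \<Rightarrow> bool" where
  "valid_tree p (DNode J ts) = (rule_inst p J (map droot ts) \<and> (\<forall>t\<in>set ts. valid_tree p t))"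

fun tree_judgs :: "('v, 'c, 'f) dtree \<Rightarrow> ('v, 'c, 'f) judg set" where
  "tree_judgs (DNode J ts) = insert J (\<Union>t\<in>set ts. tree_judgs t)"

definition sem_tree :: "('v, 'c, 'f) prog \<Rightarrow> 'v list \<Rightarrow> ('v, 'c, 'f) expr list
    \<Rightarrow> ('v, 'c, 'f) expr \<Rightarrow> ('v, 'c, 'f) dtree \<Rightarrow> bool" where
  "sem_tree p xs ds b T =
    (valid_tree p T \<and>
     droot T = JEval (map_of (zip xs ds)) (apps (EFun (main_fun p)) (map EVar xs)) b)"

definition B_set :: "('v, 'c, 'f) prog \<Rightarrow> ('v, 'c, 'f) expr list \<Rightarrow> ('v, 'c, 'f) expr set" where
  "B_set p ds = {d. is_data d \<and> ((\<exists>di\<in>set ds. sube di d) \<or> (\<exists>cl\<in>set p. sube (crhs cl) d))}"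

fun judg_rel :: "('v, 'c, 'f) judg \<Rightarrow> ('v, 'c, 'f) expr \<Rightarrow> bool" where
  "judg_rel (JEval \<gamma> s w) t = (sube w t \<or> (\<exists>x v. \<gamma> x = Some v \<and> sube v t))"
| "judg_rel (JIf \<gamma> b' s1 s2 w) t =
     (sube w t \<or> sube b' t \<or> (\<exists>x v. \<gamma> x = Some v \<and> sube v t))"
| "judg_rel (JCall f vs w) t = (sube w t \<or> (\<exists>v\<in>set vs. sube v t))"

end

theory Submission
  imports Defs
begin



fun hd_of :: "('v, 'c, 'f) expr \<Rightarrow> ('v, 'c, 'f) expr" where
  "hd_of (EApp a b) = hd_of a"
| "hd_of e = e"

lemma apps_Nil[simp]: "apps h [] = h" by (simp add: apps_def)
lemma apps_snoc[simp]: "apps h (xs @ [x]) = EApp (apps h xs) x" by (simp add: apps_def)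

lemma hd_apps[simp]: "hd_of (apps h xs) = hd_of h"
  by (induction xs rule: rev_induct) auto

lemma apps_ECon_inj:
  "apps (ECon c) xs = apps (ECon c') ys \<Longrightarrow> c = c' \<and> xs = ys"
proof (induction xs arbitrary: ys rule: rev_induct)
  case Nil then show ?case by (cases ys rule: rev_cases) auto
next
  case (snoc x xs) then show ?case by (cases ys rule: rev_cases) auto
qed

lemma psub_apps: "psub (apps h xs) t = (psub h t \<or> (\<exists>x\<in>set xs. sube x t))"
  by (induction xs rule: rev_induct) (auto simp: sube_def)

lemma psub_trans: "psub a b \<Longrightarrow> psub b c \<Longrightarrow> psub a c"
  by (induction a b rule: psub.induct) auto

lemma sube_trans: "sube a b \<Longrightarrow> sube b c \<Longrightarrow> sube a c"
  unfolding sube_def using psub_trans by blast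

lemma inst_apps[simp]: "inst \<gamma> (apps h xs) = apps (inst \<gamma> h) (map (inst \<gamma>) xs)"
  by (induction xs rule: rev_induct) auto

lemma psub_inst: "psub e t \<Longrightarrow> psub (inst \<gamma> e) (inst \<gamma> t)"
  by (induction e t rule: psub.induct) auto

lemma sube_inst: "sube e t \<Longrightarrow> sube (inst \<gamma> e) (inst \<gamma> t)"
  unfolding sube_def using psub_inst by blast

lemma pattern_psub: "is_pattern l \<Longrightarrow> psub l t \<Longrightarrow> is_pattern t"
  by (induction l rule: is_pattern.induct) (auto simp: psub_apps sube_def)

lemma pattern_sube: "is_pattern l \<Longrightarrow> sube l t \<Longrightarrow> is_pattern t"
  unfolding sube_def using pattern_psub by blast

lemma data_psub: "is_data l \<Longrightarrow> psub l t \<Longrightarrow> is_data t"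
  by (induction l rule: is_data.induct) (auto simp: psub_apps sube_def)

lemma data_sube: "is_data l \<Longrightarrow> sube l t \<Longrightarrow> is_data t"
  unfolding sube_def using data_psub by blast

lemma varlist_apps[simp]: "varlist (apps h xs) = varlist h @ concat (map varlist xs)"
  by (induction xs rule: rev_induct) auto

lemma pattern_var: "is_pattern l \<Longrightarrow> x \<in> set (varlist l) \<Longrightarrow> sube l (EVar x)"
  by (induction l rule: is_pattern.induct) (auto simp: psub_apps sube_def)

lemma data_inst: "is_data d \<Longrightarrow> inst \<gamma> d = d"
  by (induction d rule: is_data.induct) (simp_all add: map_idI)




lemma map_droot3: "map droot ts = [a,b,c] \<Longrightarrow> \<exists>t1 t2 t3. ts = [t1,t2,t3] \<and> droot t1 = a \<and> droot t2 = b \<and> droot t3 = c"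
  by (auto simp: map_eq_Cons_conv)
lemma map_droot2: "map droot ts = [a,b] \<Longrightarrow> \<exists>t1 t2. ts = [t1,t2] \<and> droot t1 = a \<and> droot t2 = b"
  by (auto simp: map_eq_Cons_conv)
lemma map_droot1: "map droot ts = [a] \<Longrightarrow> \<exists>t1. ts = [t1] \<and> droot t1 = a"
  by (auto simp: map_eq_Cons_conv)

lemma head_eval:
  "valid_tree p T \<Longrightarrow> droot T = JEval \<gamma> e w \<Longrightarrow> hd_of e = ECon c \<Longrightarrow> hd_of w = ECon c"
proof (induction T arbitrary: e w)
  case (DNode J ts)
  then have R: "rule_inst p (JEval \<gamma> e w) (map droot ts)" and V: "\<forall>t\<in>set ts. valid_tree p t" by auto
  from R show ?case
  proof (cases rule: rule_inst.cases)
    case (r_con ss bs c')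
    then show ?thesis using DNode.prems by simp
  next
    case (r_app s t f vs v)
    then obtain t1 t2 t3 where "ts = [t1,t2,t3]" "droot t1 = JEval \<gamma> s (apps (EFun f) vs)"
      using map_droot3 by metis
    moreover have "hd_of s = ECon c" using r_app DNode.prems by simp
    ultimately have "hd_of (apps (EFun f) vs) = ECon c" using DNode.IH[of t1 s "apps (EFun f) vs"] V by auto
    then show ?thesis by simp
  qed (use DNode.prems in auto)
qed

inductive pv :: "('v, 'c, 'f) expr \<Rightarrow> bool" where
  pv_var: "pv (EVar x)"
| pv_con: "\<forall>e\<in>set es. pv e \<Longrightarrow> pv (apps (ECon c) es)"
| pv_pair: "pv a \<Longrightarrow> pv b \<Longrightarrow> pv (EPair a b)"

lemma pattern_pv: "is_pattern l \<Longrightarrow> pv l"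
  by (induction rule: is_pattern.induct) (auto intro: pv.intros)
lemma data_pv: "is_data l \<Longrightarrow> pv l"
  by (induction rule: is_data.induct) (auto intro: pv.intros)

lemma pv_not: "pv e \<Longrightarrow> e \<noteq> EFun f \<and> e \<noteq> EChoose ss \<and> e \<noteq> EIf a b c"
proof (induction rule: pv.induct)
  case (pv_con es c')
  show ?case by (auto dest: arg_cong[where f=hd_of])
qed auto

lemma pv_eval:
  "valid_tree p T \<Longrightarrow> droot T = JEval \<gamma> e w \<Longrightarrow> pv e \<Longrightarrow> w = inst \<gamma> e"
proof (induction T arbitrary: e w)
  case (DNode J ts)
  then have R: "rule_inst p (JEval \<gamma> e w) (map droot ts)" and V: "\<forall>t\<in>set ts. valid_tree p t" by auto
  from R show ?case
  proof (cases rule: rule_inst.cases)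
    case (r_var x)
    then show ?thesis by simp
  next
    case (r_con ss bs c')
    have "length (map droot ts) = length (map2 (JEval \<gamma>) ss bs)"
      using \<open>map droot ts = map2 (JEval \<gamma>) ss bs\<close> by (rule arg_cong)
    then have L: "length ts = length ss" using \<open>length ss = length bs\<close> by (simp only: length_map length_zip min.idem)
    have D: "droot (ts ! i) = JEval \<gamma> (ss ! i) (bs ! i)" if "i < length ss" for i
    proof -
      have "map droot ts ! i = map2 (JEval \<gamma>) ss bs ! i"
        using \<open>map droot ts = map2 (JEval \<gamma>) ss bs\<close> by (rule arg_cong)
      then show ?thesis using that L \<open>length ss = length bs\<close> by simp
    qed
    from DNode.prems(3) have "\<forall>e\<in>set ss. pv e"
    proof cases
      case (pv_con es c'')
      then show ?thesis using r_con apps_ECon_inj by metis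
    next
      case pv_var then show ?thesis using r_con by (metis expr.distinct hd_apps hd_of.simps)
    next
      case pv_pair then show ?thesis using r_con by (metis expr.distinct hd_apps hd_of.simps)
    qed
    then have "bs ! i = inst \<gamma> (ss ! i)" if "i < length ss" for i
      using DNode.IH[of "ts ! i" "ss ! i" "bs ! i"] D[OF that] V L that by auto
    then have "bs = map (inst \<gamma>) ss" using r_con by (simp add: nth_equalityI)
    then show ?thesis using r_con by simp
  next
    case (r_pair s t v w')
    then obtain t1 t2 where "ts = [t1,t2]" "droot t1 = JEval \<gamma> s v" "droot t2 = JEval \<gamma> t w'"
      using map_droot2 by metis
    moreover have "pv s" "pv t" using DNode.prems(3) r_pair
      by (cases rule: pv.cases; (metis expr.distinct expr.inject hd_apps hd_of.simps)?)+
    ultimately show ?thesis using DNode.IH V r_pair by auto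
  next
    case (r_app s t f vs v)
    then obtain t1 t2 t3 where T1: "ts = [t1,t2,t3]" "droot t1 = JEval \<gamma> s (apps (EFun f) vs)"
      using map_droot3 by metis
    from DNode.prems(3) obtain c where "hd_of s = ECon c"
      using r_app by (cases rule: pv.cases) (auto, metis hd_apps hd_of.simps(1) hd_of.simps(3))
    then have "hd_of (apps (EFun f) vs) = ECon c" using head_eval[of p t1 \<gamma> s "apps (EFun f) vs" c] T1 V by auto
    then show ?thesis by simp
  qed (use pv_not[OF DNode.prems(3)] in auto)
qed




definition good :: "('v, 'c, 'f) prog \<Rightarrow> ('v, 'c, 'f) expr list \<Rightarrow> ('v, 'c, 'f) expr \<Rightarrow> bool" where
  "good p ds e = (\<forall>t c args. sube e t \<longrightarrow> t = apps (ECon c) args \<longrightarrow> t \<in> B_set p ds)"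

definition goodenv :: "('v, 'c, 'f) prog \<Rightarrow> ('v, 'c, 'f) expr list \<Rightarrow> ('v, 'c, 'f) env \<Rightarrow> bool" where
  "goodenv p ds \<gamma> = (\<forall>x v. \<gamma> x = Some v \<longrightarrow> good p ds v)"

definition okexpr :: "('v, 'c, 'f) prog \<Rightarrow> ('v, 'c, 'f) expr list \<Rightarrow> ('v, 'c, 'f) env \<Rightarrow> ('v, 'c, 'f) expr \<Rightarrow> bool" where
  "okexpr p ds \<gamma> s = (\<forall>t c args. sube s t \<longrightarrow> t = apps (ECon c) args \<longrightarrow>
     (is_data t \<and> t \<in> B_set p ds) \<or> (is_pattern t \<and> good p ds (inst \<gamma> t)))"

fun pre :: "('v, 'c, 'f) prog \<Rightarrow> ('v, 'c, 'f) expr list \<Rightarrow> ('v, 'c, 'f) judg \<Rightarrow> bool" where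
  "pre p ds (JEval \<gamma> s w) = (goodenv p ds \<gamma> \<and> okexpr p ds \<gamma> s)"
| "pre p ds (JIf \<gamma> d s2 s3 w) = (goodenv p ds \<gamma> \<and> good p ds d \<and> okexpr p ds \<gamma> s2 \<and> okexpr p ds \<gamma> s3)"
| "pre p ds (JCall f vs w) = (\<forall>v\<in>set vs. good p ds v)"

fun out :: "('v, 'c, 'f) judg \<Rightarrow> ('v, 'c, 'f) expr" where
  "out (JEval \<gamma> s w) = w"
| "out (JIf \<gamma> d s2 s3 w) = w"
| "out (JCall f vs w) = w"

lemma good_sub: "good p ds e \<Longrightarrow> sube e e' \<Longrightarrow> good p ds e'"
  unfolding good_def
proof (intro allI impI)
  fix t c args assume "\<forall>t c args. sube e t \<longrightarrow> t = apps (ECon c) args \<longrightarrow> t \<in> B_set p ds"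
    "sube e e'" "sube e' t" "t = apps (ECon c) args"
  moreover have "sube e t" using sube_trans calculation by blast
  ultimately show "t \<in> B_set p ds" by blast
qed

lemma good_psub: "good p ds e \<Longrightarrow> psub e e' \<Longrightarrow> good p ds e'"
  using good_sub sube_def by blast

lemma okexpr_sub: "okexpr p ds \<gamma> e \<Longrightarrow> psub e e' \<Longrightarrow> okexpr p ds \<gamma> e'"
  unfolding okexpr_def
proof (intro allI impI)
  fix t c args assume A: "\<forall>t c args. sube e t \<longrightarrow> t = apps (ECon c) args \<longrightarrow>
     (is_data t \<and> t \<in> B_set p ds) \<or> (is_pattern t \<and> good p ds (inst \<gamma> t))"
    and "psub e e'" "sube e' t" and t: "t = apps (ECon c) args"
  then have "sube e t" using psub_trans sube_def by metis
  then show "(is_data t \<and> t \<in> B_set p ds) \<or> (is_pattern t \<and> good p ds (inst \<gamma> t))"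
    using A t by blast
qed

lemma hd_con: "t = apps (ECon c) args \<Longrightarrow> hd_of t = ECon c" by simp

lemma good_EPair: "good p ds a \<Longrightarrow> good p ds b \<Longrightarrow> good p ds (EPair a b)"
  unfolding good_def
proof (intro allI impI)
  fix t c args assume a: "\<forall>t c args. sube a t \<longrightarrow> t = apps (ECon c) args \<longrightarrow> t \<in> B_set p ds"
    and b: "\<forall>t c args. sube b t \<longrightarrow> t = apps (ECon c) args \<longrightarrow> t \<in> B_set p ds"
    and s: "sube (EPair a b) t" and t: "t = apps (ECon c) args"
  have "t \<noteq> EPair a b" using hd_con[OF t] by auto
  then have "sube a t \<or> sube b t" using s by (auto simp: sube_def)
  then show "t \<in> B_set p ds" using a b t by blast
qed

lemma good_apps_fun: "\<forall>v\<in>set vs. good p ds v \<Longrightarrow> good p ds (apps (EFun f) vs)"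
  unfolding good_def
proof (intro allI impI)
  fix t c args assume a: "\<forall>v\<in>set vs. \<forall>t c args. sube v t \<longrightarrow> t = apps (ECon c) args \<longrightarrow> t \<in> B_set p ds"
    and s: "sube (apps (EFun f) vs) t" and t: "t = apps (ECon c) args"
  have "t \<noteq> apps (EFun f) vs" using hd_con[OF t] by auto
  then obtain v where "v \<in> set vs" "sube v t" using s by (auto simp: sube_def psub_apps)
  then show "t \<in> B_set p ds" using a t by blast
qed

lemma good_apps_fun_D: "good p ds (apps (EFun f) vs) \<Longrightarrow> v \<in> set vs \<Longrightarrow> good p ds v"
  using good_psub psub_apps sube_def by metis

lemma good_apps_con: "\<forall>v\<in>set vs. good p ds v \<Longrightarrow> apps (ECon c) vs \<in> B_set p ds \<Longrightarrow> good p ds (apps (ECon c) vs)"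
  unfolding good_def
proof (intro allI impI)
  fix t c' args assume a: "\<forall>v\<in>set vs. \<forall>t c args. sube v t \<longrightarrow> t = apps (ECon c) args \<longrightarrow> t \<in> B_set p ds"
    and s: "sube (apps (ECon c) vs) t" and t: "t = apps (ECon c') args"
    and B: "apps (ECon c) vs \<in> B_set p ds"
  show "t \<in> B_set p ds"
  proof (cases "t = apps (ECon c) vs")
    case True then show ?thesis using B by simp
  next
    case False
    then obtain v where "v \<in> set vs" "sube v t" using s by (auto simp: sube_def psub_apps)
    then show "t \<in> B_set p ds" using a t by blast
  qed
qed




lemma okexpr_app_arg: "okexpr p ds \<gamma> (EApp s t) \<Longrightarrow> okexpr p ds \<gamma> t"
  using okexpr_sub by (metis psub.simps(4))

lemma okexpr_app_head: "okexpr p ds \<gamma> (EApp s t) \<Longrightarrow> (\<forall>c. hd_of s \<noteq> ECon c) \<Longrightarrow> okexpr p ds \<gamma> s"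
  unfolding okexpr_def
proof (intro allI impI)
  fix t' c args assume A: "\<forall>u c args. sube (EApp s t) u \<longrightarrow> u = apps (ECon c) args \<longrightarrow>
     (is_data u \<and> u \<in> B_set p ds) \<or> (is_pattern u \<and> good p ds (inst \<gamma> u))"
    and H: "\<forall>c. hd_of s \<noteq> ECon c" and S: "sube s t'" and t: "t' = apps (ECon c) args"
  have h: "hd_of t' = ECon c" using t by (rule hd_con)
  have "t' \<noteq> s"
  proof
    assume e: "t' = s"
    have "hd_of s \<noteq> ECon c" using H by (rule spec)
    then show False using h e by (simp only:) 
  qed
  then have "psub s t'" using S unfolding sube_def by auto
  then have "sube (EApp s t) t'" unfolding sube_def by simp
  then show "(is_data t' \<and> t' \<in> B_set p ds) \<or> (is_pattern t' \<and> good p ds (inst \<gamma> t'))"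
    by (rule A[rule_format, OF _ t])
qed

lemma map_set_in: "x \<in> set xs \<Longrightarrow> f x \<in> set (map f xs)" by simp

lemma main:
  assumes PAT: "\<forall>cl\<in>set p. \<forall>l\<in>set (cargs cl). is_pattern l" and CF: "cons_free p"
  shows "valid_tree p T \<Longrightarrow> pre p ds (droot T) \<Longrightarrow>
    good p ds (out (droot T)) \<and> (\<forall>J\<in>tree_judgs T. pre p ds J \<and> good p ds (out J))"
proof (induction T)
  case (DNode J ts)
  have R: "rule_inst p J (map droot ts)" and V: "\<forall>t\<in>set ts. valid_tree p t"
    using DNode.prems by auto
  have P: "pre p ds J" using DNode.prems by simp
  have IH: "good p ds (out (droot t))" if "t \<in> set ts" "pre p ds (droot t)" for t
    using DNode.IH that V by blast
  have claim: "(\<forall>t\<in>set ts. pre p ds (droot t)) \<and> good p ds (out J)"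
    using R
  proof (cases rule: rule_inst.cases)
    case (r_var \<gamma> x w)
    then show ?thesis using P by (auto simp: goodenv_def)
  next
    case (r_fun \<gamma> f w)
    then obtain t1 where T: "ts = [t1]" "droot t1 = JCall f [] w" using map_droot1 by metis
    then show ?thesis using IH r_fun by auto
  next
    case (r_con ss bs \<gamma> c)
    have "length (map droot ts) = length (map2 (JEval \<gamma>) ss bs)"
      using \<open>map droot ts = map2 (JEval \<gamma>) ss bs\<close> by (rule arg_cong)
    then have L: "length ts = length ss" using \<open>length ss = length bs\<close> by (simp only: length_map length_zip min.idem)
    have D: "droot (ts ! i) = JEval \<gamma> (ss ! i) (bs ! i)" if "i < length ss" for i
    proof -
      have "map droot ts ! i = map2 (JEval \<gamma>) ss bs ! i"
        using \<open>map droot ts = map2 (JEval \<gamma>) ss bs\<close> by (rule arg_cong)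
      then show ?thesis using that L \<open>length ss = length bs\<close> by simp
    qed
    have GE: "goodenv p ds \<gamma>" and OK: "okexpr p ds \<gamma> (apps (ECon c) ss)" using P r_con by auto
    have PC: "pre p ds (droot (ts ! i))" if "i < length ss" for i
    proof -
      have "psub (apps (ECon c) ss) (ss ! i)" using that by (auto simp: psub_apps sube_def)
      then show ?thesis using D[OF that] GE okexpr_sub[OF OK] by simp
    qed
    have PCs: "\<forall>t\<in>set ts. pre p ds (droot t)" using PC L by (metis in_set_conv_nth)
    have Gb: "\<forall>b\<in>set bs. good p ds b"
    proof
      fix b assume "b \<in> set bs"
      then obtain i where i: "i < length bs" "b = bs ! i" by (metis in_set_conv_nth)
      then have "good p ds (out (droot (ts ! i)))" using IH PC L \<open>length ss = length bs\<close> by simp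
      then show "good p ds b" using D i \<open>length ss = length bs\<close> by simp
    qed
    have VJ: "valid_tree p (DNode J ts)" using DNode.prems by simp
    have W: "apps (ECon c) bs = inst \<gamma> (apps (ECon c) ss)" if "pv (apps (ECon c) ss)"
      using pv_eval[OF VJ _ that] r_con by simp
    have "apps (ECon c) bs \<in> B_set p ds"
    proof -
      have "(is_data (apps (ECon c) ss) \<and> apps (ECon c) ss \<in> B_set p ds) \<or>
        (is_pattern (apps (ECon c) ss) \<and> good p ds (inst \<gamma> (apps (ECon c) ss)))"
        using OK unfolding okexpr_def sube_def by blast
      then show ?thesis
      proof
        assume a: "is_data (apps (ECon c) ss) \<and> apps (ECon c) ss \<in> B_set p ds"
        then show ?thesis using W[OF data_pv] data_inst by metis
      next
        assume a: "is_pattern (apps (ECon c) ss) \<and> good p ds (inst \<gamma> (apps (ECon c) ss))"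
        then have "good p ds (apps (ECon c) bs)" using W[OF pattern_pv] by metis
        then show ?thesis unfolding good_def sube_def by blast
      qed
    qed
    then show ?thesis using PCs Gb good_apps_con r_con by auto
  next
    case (r_pair \<gamma> s t v w)
    then obtain t1 t2 where T: "ts = [t1,t2]" "droot t1 = JEval \<gamma> s v" "droot t2 = JEval \<gamma> t w"
      using map_droot2 by metis
    have P1: "pre p ds (droot t1)" and P2: "pre p ds (droot t2)"
      using P r_pair T okexpr_sub[of p ds \<gamma> "EPair s t"] by auto
    have "good p ds v" using IH[of t1] P1 T by simp
    moreover have "good p ds w" using IH[of t2] P2 T by simp
    ultimately show ?thesis using T r_pair good_EPair P1 P2 by auto
  next
    case (r_choose i ss \<gamma> w)
    then obtain t1 where T: "ts = [t1]" "droot t1 = JEval \<gamma> (ss ! i) w" using map_droot1 by metis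
    have "psub (EChoose ss) (ss ! i)" using r_choose by auto
    then have "pre p ds (droot t1)" using P r_choose T okexpr_sub[of p ds \<gamma> "EChoose ss"] by auto
    then show ?thesis using IH[of t1] T r_choose by auto
  next
    case (r_if \<gamma> s1 s2 s3 w d)
    then obtain t1 t2 where T: "ts = [t1,t2]" "droot t1 = JEval \<gamma> s1 d" "droot t2 = JIf \<gamma> d s2 s3 w"
      using map_droot2 by metis
    have P1: "pre p ds (droot t1)"
      using P r_if T okexpr_sub[of p ds \<gamma> "EIf s1 s2 s3"] by auto
    then have "good p ds d" using IH[of t1] T by simp
    then have P2: "pre p ds (droot t2)"
      using P r_if T okexpr_sub[of p ds \<gamma> "EIf s1 s2 s3"] by auto
    then show ?thesis using IH[of t2] T P1 r_if by auto
  next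
    case (r_if_true \<gamma> s2 s3 w)
    then obtain t1 where T: "ts = [t1]" "droot t1 = JEval \<gamma> s2 w" using map_droot1 by metis
    then have "pre p ds (droot t1)" using P r_if_true by auto
    then show ?thesis using IH[of t1] T r_if_true by auto
  next
    case (r_if_false \<gamma> s2 s3 w)
    then obtain t1 where T: "ts = [t1]" "droot t1 = JEval \<gamma> s3 w" using map_droot1 by metis
    then have "pre p ds (droot t1)" using P r_if_false by auto
    then show ?thesis using IH[of t1] T r_if_false by auto
  next
    case (r_app \<gamma> s t w f vs v)
    then obtain t1 t2 t3 where T: "ts = [t1,t2,t3]" "droot t1 = JEval \<gamma> s (apps (EFun f) vs)"
       "droot t2 = JEval \<gamma> t v" "droot t3 = JCall f (vs @ [v]) w"
      using map_droot3 by metis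
    have "\<forall>c. hd_of s \<noteq> ECon c"
    proof (intro allI notI)
      fix c assume "hd_of s = ECon c"
      then have "hd_of (apps (EFun f) vs) = ECon c"
        using head_eval[of p t1 \<gamma> s "apps (EFun f) vs" c] T V by auto
      then show False by simp
    qed
    then have P1: "pre p ds (droot t1)" using P r_app T okexpr_app_head by auto
    have P2: "pre p ds (droot t2)" using P r_app T okexpr_app_arg by auto
    have G1: "good p ds (apps (EFun f) vs)" using IH[of t1] P1 T by simp
    have G2: "good p ds v" using IH[of t2] P2 T by simp
    have P3: "pre p ds (droot t3)" using T G2 good_apps_fun_D[OF G1] by auto
    then show ?thesis using IH[of t3] T P1 P2 r_app by auto
  next
    case (r_partial vs f)
    then show ?thesis using P good_apps_fun by auto
  next
    case (r_clause f vs i \<gamma> w)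
    then obtain t1 where T: "ts = [t1]" "droot t1 = JEval \<gamma> (crhs (p ! i)) w" using map_droot1 by metis
    define cl where "cl = p ! i"
    have clp: "cl \<in> set p" using r_clause unfolding first_match_def cl_def by simp
    have Gv: "\<forall>v\<in>set vs. good p ds v" using P r_clause by simp
    have Gl: "good p ds (inst \<gamma> l)" if "l \<in> set (cargs cl)" for l
    proof -
      have "inst \<gamma> l \<in> set (map (inst \<gamma>) (cargs cl))" using that by (rule map_set_in)
      then have "inst \<gamma> l \<in> set vs" using \<open>vs = map (inst \<gamma>) (cargs (p ! i))\<close> unfolding cl_def by (simp only:)
      then show ?thesis using Gv by blast
    qed
    have GE: "goodenv p ds \<gamma>" unfolding goodenv_def
    proof (intro allI impI)
      fix x u assume xu: "\<gamma> x = Some u"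
      then have "x \<in> dom \<gamma>" by blast
      then have "x \<in> lhs_vars cl" using \<open>dom \<gamma> = lhs_vars (p ! i)\<close> cl_def by simp
      then obtain l where l: "l \<in> set (cargs cl)" "x \<in> set (varlist l)"
        unfolding lhs_vars_def by auto
      have "is_pattern l" using bspec[OF bspec[OF PAT clp] l(1)] .
      then have "sube l (EVar x)" using l(2) by (rule pattern_var)
      then have "sube (inst \<gamma> l) u" using sube_inst[of l "EVar x" \<gamma>] xu by simp
      then show "good p ds u" by (rule good_sub[OF Gl[OF l(1)]])
    qed
    have OK: "okexpr p ds \<gamma> (crhs cl)" unfolding okexpr_def
    proof (intro allI impI)
      fix t c args assume S: "sube (crhs cl) t" and t: "t = apps (ECon c) args"
      have "cons_free_clause cl" using CF clp cons_free_def by blast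
      then have "is_data t \<or> (\<exists>l\<in>set (cargs cl). sube l t)"
        unfolding cons_free_clause_def using S t by blast
      then show "(is_data t \<and> t \<in> B_set p ds) \<or> (is_pattern t \<and> good p ds (inst \<gamma> t))"
      proof
        assume "is_data t" note dt = this
        have "t \<in> B_set p ds" unfolding B_set_def mem_Collect_eq using dt S clp by blast
        then show ?thesis using dt by blast
      next
        assume "\<exists>l\<in>set (cargs cl). sube l t"
        then obtain l where l: "l \<in> set (cargs cl)" "sube l t" by blast
        have "is_pattern l" using bspec[OF bspec[OF PAT clp] l(1)] .
        then have "is_pattern t" using l(2) by (rule pattern_sube)
        moreover have "good p ds (inst \<gamma> t)" using good_sub[OF Gl[OF l(1)] sube_inst[OF l(2)]] .
        ultimately show ?thesis by blast
      qed
    qed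
    have "pre p ds (droot t1)" using T GE OK cl_def by simp
    then show ?thesis using IH[of t1] T r_clause by auto
  qed
  show ?case
  proof
    show "good p ds (out (droot (DNode J ts)))" using claim by simp
    show "\<forall>J'\<in>tree_judgs (DNode J ts). pre p ds J' \<and> good p ds (out J')"
    proof
      fix J' assume "J' \<in> tree_judgs (DNode J ts)"
      then have "J' = J \<or> (\<exists>t\<in>set ts. J' \<in> tree_judgs t)" by simp
      then show "pre p ds J' \<and> good p ds (out J')"
      proof
        assume "J' = J" then show ?thesis using P claim by simp
      next
        assume "\<exists>t\<in>set ts. J' \<in> tree_judgs t"
        then obtain t where "t \<in> set ts" "J' \<in> tree_judgs t" by blast
        then show ?thesis using DNode.IH V claim by blast
      qed
    qed
  qed
qed




theorem lemma2:
  fixes S :: "'s set" and p :: "('v, 'c, 'f) prog"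
    and xs :: "'v list" and ds :: "('v, 'c, 'f) expr list"
  assumes "finite S"
    and "well_formed S p"
    and "cons_free p"
    and "distinct xs" and "length xs = length ds"
    and "\<forall>d\<in>set ds. is_data d"
    and "sem_tree p xs ds b T"
    and "J \<in> tree_judgs T"
    and "judg_rel J t"
    and "t = apps (ECon c) args"
  shows "t \<in> B_set p ds"
proof -
  have PAT: "\<forall>cl\<in>set p. \<forall>l\<in>set (cargs cl). is_pattern l"
    using assms(2) unfolding well_formed_def well_typed_with_def by blast
  have VT: "valid_tree p T" and RT: "droot T = JEval (map_of (zip xs ds)) (apps (EFun (main_fun p)) (map EVar xs)) b"
    using assms(7) unfolding sem_tree_def by auto
  have GE: "goodenv p ds (map_of (zip xs ds))" unfolding goodenv_def
  proof (intro allI impI)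
    fix x v assume "map_of (zip xs ds) x = Some v"
    then have "(x, v) \<in> set (zip xs ds)" by (rule map_of_SomeD)
    then have vd: "v \<in> set ds" by (rule set_zip_rightD)
    then have dv: "is_data v" using assms(6) by blast
    show "good p ds v" unfolding good_def
    proof (intro allI impI)
      fix t :: "('v, 'c, 'f) expr" and c args assume "sube v t" "t = apps (ECon c) args"
      then have "is_data t" using data_sube dv by blast
      then show "t \<in> B_set p ds" unfolding B_set_def mem_Collect_eq using vd \<open>sube v t\<close> by blast
    qed
  qed
  have OK: "okexpr p ds (map_of (zip xs ds)) (apps (EFun (main_fun p)) (map EVar xs))"
    unfolding okexpr_def
  proof (intro allI impI)
    fix t :: "('v, 'c, 'f) expr" and c args assume S: "sube (apps (EFun (main_fun p)) (map EVar xs)) t" and t: "t = apps (ECon c) args"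
    have "t \<noteq> apps (EFun (main_fun p)) (map EVar xs)" using hd_con[OF t] by auto
    then obtain y where "y \<in> set (map EVar xs)" "sube y t" using S by (auto simp: sube_def psub_apps)
    then obtain x where "sube (EVar x) t" by auto
    then have "t = EVar x" by (simp add: sube_def)
    then have False using hd_con[OF t] by simp
    then show "(is_data t \<and> t \<in> B_set p ds) \<or> (is_pattern t \<and> good p ds (inst (map_of (zip xs ds)) t))" ..
  qed
  have "pre p ds (droot T)" using RT GE OK by simp
  then have M: "pre p ds J \<and> good p ds (out J)"
    using main[OF PAT assms(3) VT] assms(8) by blast
  have GW: "t \<in> B_set p ds" if "good p ds e" "sube e t" for e
    using that assms(10) unfolding good_def by blast
  have GV: "t \<in> B_set p ds" if GE0: "goodenv p ds \<gamma>" and EX0: "\<exists>x v. \<gamma> x = Some v \<and> sube v t" for \<gamma>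
  proof -
    obtain x v where "\<gamma> x = Some v" "sube v t" using EX0 by blast
    then have "good p ds v" using GE0 unfolding goodenv_def by blast
    then show ?thesis using GW \<open>sube v t\<close> by blast
  qed
  show ?thesis
  proof (cases J)
    case (JEval \<gamma> s w)
    then have "goodenv p ds \<gamma>" "good p ds w" using M by auto
    moreover have "sube w t \<or> (\<exists>x v. \<gamma> x = Some v \<and> sube v t)" using assms(9) JEval by simp
    ultimately show ?thesis using GW GV by blast
  next
    case (JIf \<gamma> d s2 s3 w)
    then have "goodenv p ds \<gamma>" "good p ds w" "good p ds d" using M by auto
    moreover have "sube w t \<or> sube d t \<or> (\<exists>x v. \<gamma> x = Some v \<and> sube v t)" using assms(9) JIf by simp
    ultimately show ?thesis using GW GV by blast
  next
    case (JCall f vs w)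
    then have "\<forall>v\<in>set vs. good p ds v" "good p ds w" using M by auto
    moreover have "sube w t \<or> (\<exists>v\<in>set vs. sube v t)" using assms(9) JCall by simp
    ultimately show ?thesis using GW by blast
  qed
qed


end
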